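(* Assume $\mathbf a,\mathbf b\in\Delta^n$ with strictly positive entries, let $\kappa=1/\min\{a_{min},b_{min}\}$ and $M=\log(2)\|C\|_\infty^2(n+3\kappa)^2+2n\|C\|_\infty^2$. Then $$0\le\mathrm{OT}(\mathbf a,\mathbf b)-\mathbf{UOT}_{\mathbf{KL}}(\mathbf a,\mathbf b)\le\frac{M}{\tau},$$ where $\mathrm{OT}(\mathbf a,\mathbf b)=\min_{X\in\Pi(\mathbf a,\mathbf b)}\langle C,X\rangle$ and $\mathbf{UOT}_{\mathbf{KL}}(\mathbf a,\mathbf b)=\min_{X\in\mathbb{R}^{n\times n}_+}\big\{\langle C,X\rangle+\tau\mathbf{KL}(X\mathbf 1_n\|\mathbf a)+\tau\mathbf{KL}(X^\top\mathbf 1_n\|\mathbf b)\big\}$.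
   Context: Let $n\ge1$, $C\in\mathbb{R}^{n\times n}$ with nonnegative entries and $\|C\|_\infty=\max_{i,j}|C_{ij}|$; $\tau>0$; $\Delta^n=\{\mathbf x\in\mathbb{R}^n_+:\sum_i x_i=1\}$; $a_{min}=\min_i a_i$, $b_{min}=\min_i b_i$; $\Pi(\mathbf a,\mathbf b)=\{X\in\mathbb{R}^{n\times n}_+:X\mathbf 1_n=\mathbf a,\ X^\top\mathbf 1_n=\mathbf b\}$. For $\mathbf x\in\mathbb{R}^n_+$ and $\mathbf y$ with positive entries, $\mathbf{KL}(\mathbf x\|\mathbf y)=\sum_i x_i\log(x_i/y_i)-x_i+y_i$ (with $0\log0=0$). $\mathbf 1_n$ is the all-ones vector. *)

theory Defs
  imports Complex_Main
begin

text \<open>Vectors in R^n are functions 'n => real, n x n matrices are 'n => 'n => real,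
  for a finite index type 'n with n = CARD('n).\<close>

definition simplex :: "('n::finite \<Rightarrow> real) set" where
  "simplex = {x. (\<forall>i. x i \<ge> 0) \<and> (\<Sum>i\<in>UNIV. x i) = 1}"

definition inf_norm :: "('n::finite \<Rightarrow> 'n \<Rightarrow> real) \<Rightarrow> real" where
  "inf_norm C = Max {\<bar>C i j\<bar> | i j. True}"

definition frob :: "('n::finite \<Rightarrow> 'n \<Rightarrow> real) \<Rightarrow> ('n \<Rightarrow> 'n \<Rightarrow> real) \<Rightarrow> real" where
  "frob C X = (\<Sum>i\<in>UNIV. \<Sum>j\<in>UNIV. C i j * X i j)"

definition row_sums :: "('n::finite \<Rightarrow> 'n \<Rightarrow> real) \<Rightarrow> 'n \<Rightarrow> real" where
  "row_sums X = (\<lambda>i. \<Sum>j\<in>UNIV. X i j)"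

definition col_sums :: "('n::finite \<Rightarrow> 'n \<Rightarrow> real) \<Rightarrow> 'n \<Rightarrow> real" where
  "col_sums X = (\<lambda>j. \<Sum>i\<in>UNIV. X i j)"

definition nonneg_mats :: "('n::finite \<Rightarrow> 'n \<Rightarrow> real) set" where
  "nonneg_mats = {X. \<forall>i j. X i j \<ge> 0}"

definition transport_polytope :: "('n::finite \<Rightarrow> real) \<Rightarrow> ('n \<Rightarrow> real) \<Rightarrow> ('n \<Rightarrow> 'n \<Rightarrow> real) set" where
  "transport_polytope a b = {X \<in> nonneg_mats. row_sums X = a \<and> col_sums X = b}"

definition KL :: "('n::finite \<Rightarrow> real) \<Rightarrow> ('n \<Rightarrow> real) \<Rightarrow> real" where
  "KL x y = (\<Sum>i\<in>UNIV. (if x i = 0 then 0 else x i * ln (x i / y i)) - x i + y i)"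

definition OT :: "('n::finite \<Rightarrow> 'n \<Rightarrow> real) \<Rightarrow> ('n \<Rightarrow> real) \<Rightarrow> ('n \<Rightarrow> real) \<Rightarrow> real" where
  "OT C a b = Inf (frob C ` transport_polytope a b)"

definition UOT_KL :: "('n::finite \<Rightarrow> 'n \<Rightarrow> real) \<Rightarrow> real \<Rightarrow> ('n \<Rightarrow> real) \<Rightarrow> ('n \<Rightarrow> real) \<Rightarrow> real" where
  "UOT_KL C \<tau> a b = Inf ((\<lambda>X. frob C X + \<tau> * KL (row_sums X) a + \<tau> * KL (col_sums X) b) ` nonneg_mats)"

end

theory Submission
  imports Defs
begin

lemma inf_norm_ge: "\<bar>C i j\<bar> \<le> inf_norm (C::'n::finite \<Rightarrow> 'n \<Rightarrow> real)"
  unfolding inf_norm_def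
proof (rule Max_ge)
  have "{\<bar>C i j\<bar> | i j. True} = (\<lambda>(i,j). \<bar>C i j\<bar>) ` UNIV" by auto
  then show "finite {\<bar>C i j\<bar> | i j. True}" by simp
qed auto

lemma exp_quad:
  fixes v :: real assumes "\<bar>v\<bar> \<le> 1" shows "exp v - 1 - v \<le> v\<^sup>2"
proof (cases "v \<ge> 0")
  case True then show ?thesis using exp_bound[of v] assms by simp
next
  case False
  have e: "exp (-v) \<ge> 1 - v" using exp_ge_add_one_self[of "-v"] by simp
  have "exp v = 1 / exp (-v)" by (simp add: exp_minus field_simps)
  also have "\<dots> \<le> 1 / (1 - v)" using e False by (intro divide_left_mono) auto
  also have "\<dots> \<le> 1 + v + v\<^sup>2"
  proof -
    have eq: "(1 - v) * (1 + v + v\<^sup>2) = 1 - v * v\<^sup>2" by (simp add: algebra_simps power2_eq_square)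
    have "v * v\<^sup>2 \<le> 0" using False by (intro mult_nonpos_nonneg) auto
    then have "1 \<le> (1 - v) * (1 + v + v\<^sup>2)" unfolding eq by simp
    then show ?thesis using False by (simp add: divide_simps mult.commute)
  qed
  finally show ?thesis by simp
qed

lemma KL_term:
  fixes x y v :: real assumes x: "x \<ge> 0" and y: "y > 0"
  shows "(if x = 0 then 0 else x * ln (x / y)) - x + y \<ge> v * (x - y) - y * (exp v - 1 - v)"
proof (cases "x = 0")
  case True then show ?thesis using y by (simp add: algebra_simps)
next
  case False
  then have xp: "x > 0" using x by simp
  have "exp (v - ln (x / y)) \<ge> 1 + (v - ln (x / y))" by (rule exp_ge_add_one_self)
  moreover have "exp (v - ln (x / y)) = exp v * y / x" using xp y by (simp add: exp_diff)
  ultimately have "exp v * y / x \<ge> 1 + v - ln (x / y)" by simp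
  then have "exp v * y \<ge> x * (1 + v - ln (x / y))" using xp by (simp add: divide_simps mult.commute)
  then have h: "0 \<le> y * exp v - x * (1 + v - ln (x / y))" by (simp add: mult.commute)
  have "v * (x - y) - y * (exp v - 1 - v) = (x * ln (x / y) - x + y) - (y * exp v - x * (1 + v - ln (x / y)))"
    by (simp add: algebra_simps)
  also have "\<dots> \<le> x * ln (x / y) - x + y" using h by simp
  finally show ?thesis using False by simp
qed

lemma KL_lower:
  fixes x y :: "'n::finite \<Rightarrow> real"
  assumes x: "\<forall>i. x i \<ge> 0" and y: "\<forall>i. y i > 0" and ys: "(\<Sum>i\<in>UNIV. y i) = 1"
    and u: "0 \<le> u" "u \<le> 1"
  shows "KL x y \<ge> u * (\<Sum>i\<in>UNIV. \<bar>x i - y i\<bar>) - u\<^sup>2"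
proof -
  have t: "(if x i = 0 then 0 else x i * ln (x i / y i)) - x i + y i \<ge> u * \<bar>x i - y i\<bar> - y i * u\<^sup>2" for i
  proof -
    define v where "v = (if x i \<ge> y i then u else -u)"
    have "\<bar>v\<bar> \<le> 1" using u by (simp add: v_def)
    have v2: "v\<^sup>2 = u\<^sup>2" by (simp add: v_def)
    have "exp v - 1 - v \<le> u\<^sup>2" using exp_quad[of v] \<open>\<bar>v\<bar> \<le> 1\<close> v2 by simp
    then have "y i * (exp v - 1 - v) \<le> y i * u\<^sup>2" using y by (intro mult_left_mono) (auto simp: less_imp_le)
    moreover have "v * (x i - y i) = u * \<bar>x i - y i\<bar>" by (cases "x i \<ge> y i") (auto simp: v_def algebra_simps)
    ultimately show ?thesis using KL_term[of "x i" "y i" v] x[rule_format, of i] y[rule_format, of i] by linarith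
  qed
  have "(\<Sum>i\<in>UNIV. u * \<bar>x i - y i\<bar> - y i * u\<^sup>2) = u * (\<Sum>i\<in>UNIV. \<bar>x i - y i\<bar>) - (\<Sum>i\<in>UNIV. y i) * u\<^sup>2"
    by (simp only: sum_subtractf sum_distrib_left sum_distrib_right)
  then have "u * (\<Sum>i\<in>UNIV. \<bar>x i - y i\<bar>) - u\<^sup>2 = (\<Sum>i\<in>UNIV. u * \<bar>x i - y i\<bar> - y i * u\<^sup>2)"
    using ys by simp
  also have "\<dots> \<le> KL x y" unfolding KL_def by (rule sum_mono) (rule t)
  finally show ?thesis .
qed

lemma frob_mono:
  assumes "\<forall>i j. C i j \<ge> (0::real)" "\<forall>i j. X i j \<le> Y i j"
  shows "frob C X \<le> frob (C::'n::finite \<Rightarrow> 'n \<Rightarrow> real) Y"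
  unfolding frob_def using assms by (intro sum_mono mult_left_mono) auto

lemma rounding:
  fixes C X :: "'n::finite \<Rightarrow> 'n \<Rightarrow> real" and a b :: "'n \<Rightarrow> real"
  assumes X: "\<forall>i j. X i j \<ge> 0" and C: "\<forall>i j. 0 \<le> C i j \<and> C i j \<le> D"
    and a: "a \<in> simplex" and b: "b \<in> simplex"
  shows "\<exists>Y\<in>transport_polytope a b. frob C Y \<le> frob C X + D * ((\<Sum>i\<in>UNIV. \<bar>row_sums X i - a i\<bar>) + (\<Sum>j\<in>UNIV. \<bar>col_sums X j - b j\<bar>))"
proof -
  define r where "r = row_sums X"
  define c where "c = col_sums X"
  define \<alpha> where "\<alpha> i = (if r i \<le> a i then 1 else a i / r i)" for i
  define X1 where "X1 i j = \<alpha> i * X i j" for i j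
  define c1 where "c1 = col_sums X1"
  define \<beta> where "\<beta> j = (if c1 j \<le> b j then 1 else b j / c1 j)" for j
  define X2 where "X2 i j = X1 i j * \<beta> j" for i j
  define p where "p i = a i - row_sums X2 i" for i
  define q where "q j = b j - col_sums X2 j" for j
  define s where "s = (\<Sum>i\<in>UNIV. p i)"
  define Y where "Y i j = X2 i j + p i * q j / s" for i j
  have a0: "a i \<ge> 0" for i using a by (auto simp: simplex_def)
  have a1: "(\<Sum>i\<in>UNIV. a i) = 1" using a by (auto simp: simplex_def)
  have b0: "b i \<ge> 0" for i using b by (auto simp: simplex_def)
  have b1: "(\<Sum>i\<in>UNIV. b i) = 1" using b by (auto simp: simplex_def)
  have r0: "r i \<ge> 0" for i unfolding r_def row_sums_def using X by (simp add: sum_nonneg)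
  have al: "0 \<le> \<alpha> i \<and> \<alpha> i \<le> 1" for i
    using a0[of i] r0[of i] by (auto simp: \<alpha>_def divide_simps)
  have X1b: "0 \<le> X1 i j \<and> X1 i j \<le> X i j" for i j
    using al[of i] X by (auto simp: X1_def mult_left_le_one_le)
  have rX1: "row_sums X1 i = min (r i) (a i)" for i
  proof -
    have "row_sums X1 i = \<alpha> i * r i" by (simp add: row_sums_def X1_def r_def sum_distrib_left)
    then show ?thesis using r0[of i] a0[of i] by (auto simp: \<alpha>_def)
  qed
  have c10: "c1 j \<ge> 0" for j unfolding c1_def col_sums_def using X1b by (simp add: sum_nonneg)
  have c1c: "c1 j \<le> c j" for j unfolding c1_def c_def col_sums_def using X1b by (intro sum_mono) auto
  have be: "0 \<le> \<beta> j \<and> \<beta> j \<le> 1" for j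
    using b0[of j] c10[of j] by (auto simp: \<beta>_def divide_simps)
  have X2b: "0 \<le> X2 i j \<and> X2 i j \<le> X1 i j" for i j
    using be[of j] X1b[of i j] by (auto simp: X2_def mult_right_le_one_le)
  have cX2: "col_sums X2 j = min (c1 j) (b j)" for j
  proof -
    have "col_sums X2 j = c1 j * \<beta> j" by (simp add: col_sums_def X2_def c1_def sum_distrib_right)
    then show ?thesis using c10[of j] b0[of j] by (auto simp: \<beta>_def)
  qed
  have rX2: "row_sums X2 i \<le> a i" for i
  proof -
    have "row_sums X2 i \<le> row_sums X1 i" unfolding row_sums_def using X2b by (intro sum_mono) auto
    then show ?thesis using rX1[of i] by simp
  qed
  have p0: "p i \<ge> 0" for i using rX2[of i] by (simp add: p_def)
  have q0: "q j \<ge> 0" for j using cX2[of j] by (simp add: q_def)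
  have tot: "(\<Sum>i\<in>UNIV. row_sums X2 i) = (\<Sum>j\<in>UNIV. col_sums X2 j)"
    unfolding row_sums_def col_sums_def by (rule sum.swap)
  have sq: "(\<Sum>j\<in>UNIV. q j) = s"
    unfolding s_def p_def q_def using tot a1 b1 by (simp add: sum_subtractf)
  have pz: "p i * s / s = p i" for i
  proof (cases "s = 0")
    case True
    then have "p i = 0" using p0 unfolding s_def by (simp add: sum_nonneg_eq_0_iff)
    then show ?thesis by simp
  qed simp
  have qz: "q j * s / s = q j" for j
  proof (cases "s = 0")
    case True
    then have "q j = 0" using q0 sq by (simp add: sum_nonneg_eq_0_iff)
    then show ?thesis by simp
  qed simp
  have s0: "s \<ge> 0" unfolding s_def using p0 by (simp add: sum_nonneg)
  have Y0: "Y i j \<ge> 0" for i j using X2b[of i j] p0[of i] q0[of j] s0 by (simp add: Y_def)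
  have rY: "row_sums Y i = a i" for i
  proof -
    have "row_sums Y i = row_sums X2 i + p i * (\<Sum>j\<in>UNIV. q j) / s"
      by (simp add: row_sums_def Y_def sum.distrib sum_distrib_left sum_divide_distrib)
    then show ?thesis using pz[of i] sq by (simp add: p_def)
  qed
  have cY: "col_sums Y j = b j" for j
  proof -
    have "col_sums Y j = col_sums X2 j + (\<Sum>i\<in>UNIV. p i) * q j / s"
      by (simp add: col_sums_def Y_def sum.distrib sum_distrib_right sum_divide_distrib)
    then show ?thesis using qz[of j] by (simp add: q_def s_def[symmetric] mult.commute)
  qed
  have YT: "Y \<in> transport_polytope a b"
    unfolding transport_polytope_def nonneg_mats_def using Y0 rY cY by auto
  have D0: "D \<ge> 0" using C by (meson order_trans)
  have "frob C Y = frob C X2 + (\<Sum>i\<in>UNIV. \<Sum>j\<in>UNIV. C i j * (p i * q j / s))"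
    by (simp add: frob_def Y_def distrib_left sum.distrib)
  also have "\<dots> \<le> frob C X + (\<Sum>i\<in>UNIV. \<Sum>j\<in>UNIV. D * (p i * q j / s))"
  proof (rule add_mono)
    show "frob C X2 \<le> frob C X" using C X1b X2b by (intro frob_mono) (blast intro: order_trans)+
    show "(\<Sum>i\<in>UNIV. \<Sum>j\<in>UNIV. C i j * (p i * q j / s)) \<le> (\<Sum>i\<in>UNIV. \<Sum>j\<in>UNIV. D * (p i * q j / s))"
    proof (intro sum_mono mult_right_mono)
      fix i j
      show "C i j \<le> D" using C by auto
      have "s \<ge> 0" unfolding s_def using p0 by (simp add: sum_nonneg)
      then show "0 \<le> p i * q j / s" using p0[of i] q0[of j] by simp
    qed
  qed
  also have "(\<Sum>i\<in>UNIV. \<Sum>j\<in>UNIV. D * (p i * q j / s)) = (\<Sum>i\<in>UNIV. \<Sum>j\<in>UNIV. (D / s) * (p i * q j))"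
    by simp
  also have "\<dots> = (D / s) * (\<Sum>i\<in>UNIV. \<Sum>j\<in>UNIV. p i * q j)"
    by (simp add: sum_distrib_left)
  also have "\<dots> = (D / s) * ((\<Sum>i\<in>UNIV. p i) * (\<Sum>j\<in>UNIV. q j))"
    by (simp only: sum_product)
  also have "\<dots> = D * s" using sq unfolding s_def[symmetric] by (cases "s = 0") (auto simp: power2_eq_square)
  finally have cost: "frob C Y \<le> frob C X + D * s" .
  have m1: "min (r i) (a i) \<ge> a i - \<bar>r i - a i\<bar>" for i by simp
  have m2: "min (c1 j) (b j) \<ge> c1 j - \<bar>c j - b j\<bar>" for j using c1c[of j] by simp
  have tot1: "(\<Sum>i\<in>UNIV. row_sums X1 i) = (\<Sum>j\<in>UNIV. c1 j)"
    unfolding row_sums_def col_sums_def c1_def by (rule sum.swap)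
  have s_eq: "s = 1 - (\<Sum>j\<in>UNIV. col_sums X2 j)"
    unfolding s_def p_def using tot a1 by (simp add: sum_subtractf)
  have h1: "(\<Sum>j\<in>UNIV. col_sums X2 j) \<ge> (\<Sum>j\<in>UNIV. c1 j - \<bar>c j - b j\<bar>)"
    using m2 cX2 by (intro sum_mono) auto
  have h2: "(\<Sum>i\<in>UNIV. row_sums X1 i) \<ge> (\<Sum>i\<in>UNIV. a i - \<bar>r i - a i\<bar>)"
    using m1 rX1 by (intro sum_mono) auto
  have h1': "(\<Sum>j\<in>UNIV. col_sums X2 j) \<ge> (\<Sum>j\<in>UNIV. c1 j) - (\<Sum>j\<in>UNIV. \<bar>c j - b j\<bar>)"
    using h1 by (simp add: sum_subtractf)
  have h2': "(\<Sum>j\<in>UNIV. c1 j) \<ge> 1 - (\<Sum>i\<in>UNIV. \<bar>r i - a i\<bar>)"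
    using h2 tot1 a1 by (simp add: sum_subtractf)
  have "s \<le> (\<Sum>i\<in>UNIV. \<bar>r i - a i\<bar>) + (\<Sum>j\<in>UNIV. \<bar>c j - b j\<bar>)"
    using s_eq h1' h2' by linarith
  then have "D * s \<le> D * ((\<Sum>i\<in>UNIV. \<bar>r i - a i\<bar>) + (\<Sum>j\<in>UNIV. \<bar>c j - b j\<bar>))"
    using D0 by (rule mult_left_mono)
  then show ?thesis using cost YT unfolding r_def c_def by force
qed
theorem theorem4:
  fixes C :: "'n::finite \<Rightarrow> 'n \<Rightarrow> real" and a b :: "'n \<Rightarrow> real" and \<tau> :: real
  assumes C_nonneg: "\<forall>i j. C i j \<ge> 0"
    and tau_pos: "\<tau> > 0"
    and a_simp: "a \<in> simplex" and b_simp: "b \<in> simplex"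
    and a_pos: "\<forall>i. a i > 0" and b_pos: "\<forall>i. b i > 0"
  defines "M \<equiv> ln 2 * (inf_norm C)\<^sup>2 * (real (card (UNIV :: 'n set)) + 3 * (1 / min (Min (range a)) (Min (range b))))\<^sup>2
                  + 2 * real (card (UNIV :: 'n set)) * (inf_norm C)\<^sup>2"
  shows "0 \<le> OT C a b - UOT_KL C \<tau> a b \<and> OT C a b - UOT_KL C \<tau> a b \<le> M / \<tau>"
proof -
  define D where "D = inf_norm C"
  define g where "g X = frob C X + \<tau> * KL (row_sums X) a + \<tau> * KL (col_sums X) b" for X
  have Cb: "\<forall>i j. 0 \<le> C i j \<and> C i j \<le> D"
    using C_nonneg inf_norm_ge[of C] unfolding D_def by (metis abs_of_nonneg)
  have D0: "D \<ge> 0" using Cb[rule_format, of undefined undefined] by linarith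
  have a1: "(\<Sum>i\<in>UNIV. a i) = 1" using a_simp by (auto simp: simplex_def)
  have b1: "(\<Sum>i\<in>UNIV. b i) = 1" using b_simp by (auto simp: simplex_def)
  have KL0: "KL x y \<ge> 0" if "\<forall>i. x i \<ge> 0" "\<forall>i. y i > 0" "(\<Sum>i\<in>UNIV. y i) = 1" for x y :: "'n \<Rightarrow> real"
    using KL_lower[OF that, of 0] by simp
  have rs0: "\<forall>i. row_sums X i \<ge> 0" if "X \<in> nonneg_mats" for X
    using that unfolding nonneg_mats_def row_sums_def by (auto intro: sum_nonneg)
  have cs0: "\<forall>i. col_sums X i \<ge> 0" if "X \<in> nonneg_mats" for X
    using that unfolding nonneg_mats_def col_sums_def by (auto intro: sum_nonneg)
  have frob0: "frob C X \<ge> 0" if "X \<in> nonneg_mats" for X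
    using that C_nonneg unfolding nonneg_mats_def frob_def by (intro sum_nonneg mult_nonneg_nonneg) auto
  have g0: "g X \<ge> 0" if "X \<in> nonneg_mats" for X
    using frob0[OF that] KL0[OF rs0[OF that] a_pos a1] KL0[OF cs0[OF that] b_pos b1] tau_pos
    unfolding g_def by (simp add: add_nonneg_nonneg)
  have UOT: "UOT_KL C \<tau> a b = Inf (g ` nonneg_mats)" unfolding UOT_KL_def g_def by (rule refl)
  have OT: "OT C a b = Inf (frob C ` transport_polytope a b)" unfolding OT_def by (rule refl)
  define P0 where "P0 i j = a i * b j" for i j
  have P0n: "P0 \<in> nonneg_mats" using a_pos b_pos unfolding nonneg_mats_def P0_def
    by (simp add: less_imp_le)
  have P0r: "row_sums P0 = a"
  proof
    fix i
    have "(\<Sum>j\<in>UNIV. a i * b j) = a i * (\<Sum>j\<in>UNIV. b j)" by (rule sum_distrib_left[symmetric])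
    then show "row_sums P0 i = a i" unfolding row_sums_def P0_def using b1 by simp
  qed
  have P0c: "col_sums P0 = b"
  proof
    fix j
    have "(\<Sum>i\<in>UNIV. a i * b j) = (\<Sum>i\<in>UNIV. a i) * b j" by (rule sum_distrib_right[symmetric])
    then show "col_sums P0 j = b j" unfolding col_sums_def P0_def using a1 by simp
  qed
  have P0T: "P0 \<in> transport_polytope a b"
    unfolding transport_polytope_def using P0n P0r P0c by simp
  have ne: "(nonneg_mats :: ('n \<Rightarrow> 'n \<Rightarrow> real) set) \<noteq> {}" using P0n by blast
  have bddg: "bdd_below (g ` nonneg_mats)" by (rule bdd_belowI2[where m=0]) (rule g0)
  have bddf: "bdd_below (frob C ` transport_polytope a b)"
    by (rule bdd_belowI2[where m=0]) (rule frob0, simp add: transport_polytope_def)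
  have UOT0: "UOT_KL C \<tau> a b \<ge> 0" unfolding UOT
  proof (rule cInf_greatest)
    show "g ` nonneg_mats \<noteq> {}" using ne by blast
    fix v assume "v \<in> g ` nonneg_mats"
    then show "0 \<le> v" using g0 by blast
  qed
  have OTle: "OT C a b \<le> frob C Y" if "Y \<in> transport_polytope a b" for Y
    unfolding OT by (rule cInf_lower) (use bddf that in blast)+
  have KLself: "KL x x = 0" if "\<forall>i. x i > 0" for x :: "'n \<Rightarrow> real"
    unfolding KL_def using that by (simp add: less_imp_neq[symmetric])
  have lower: "UOT_KL C \<tau> a b \<le> OT C a b"
    unfolding OT
  proof (rule cInf_greatest)
    show "frob C ` transport_polytope a b \<noteq> {}" using P0T by auto
    fix v assume "v \<in> frob C ` transport_polytope a b"
    then obtain X where X: "X \<in> transport_polytope a b" "v = frob C X" by auto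
    then have "g X = v" using KLself[OF a_pos] KLself[OF b_pos]
      unfolding g_def transport_polytope_def by auto
    moreover have "X \<in> nonneg_mats" using X unfolding transport_polytope_def by auto
    ultimately show "UOT_KL C \<tau> a b \<le> v" unfolding UOT using bddg by (auto intro: cInf_lower)
  qed
  have n1: "real (card (UNIV :: 'n set)) \<ge> 1"
    using finite_UNIV_card_ge_0[where 'a='n] by simp
  have Mge: "M \<ge> 2 * D\<^sup>2"
  proof -
    have "ln 2 * D\<^sup>2 * (real (card (UNIV :: 'n set)) + 3 * (1 / min (Min (range a)) (Min (range b))))\<^sup>2 \<ge> 0"
      by simp
    moreover have "2 * real (card (UNIV :: 'n set)) * D\<^sup>2 \<ge> 2 * D\<^sup>2" using mult_right_mono[OF n1, of "D\<^sup>2"] by simp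
    ultimately show ?thesis unfolding M_def D_def by linarith
  qed
  have upper: "OT C a b - UOT_KL C \<tau> a b \<le> M / \<tau>"
  proof (cases "\<tau> \<le> D")
    case True
    have "frob C P0 \<le> (\<Sum>i\<in>UNIV. \<Sum>j\<in>UNIV. D * P0 i j)"
      unfolding frob_def P0_def using Cb a_pos b_pos
      by (intro sum_mono mult_right_mono) (auto simp: less_imp_le)
    also have "\<dots> = D" unfolding P0_def
      by (simp add: sum_distrib_left[symmetric] sum_distrib_right[symmetric] a1 b1)
    finally have "OT C a b \<le> D" using OTle[OF P0T] by simp
    then have "OT C a b - UOT_KL C \<tau> a b \<le> D" using UOT0 by simp
    moreover have "D * \<tau> \<le> M"
    proof -
      have "D * \<tau> \<le> D * D" using True D0 by (rule mult_left_mono)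
      moreover have "D * D \<le> 2 * D\<^sup>2" using D0 by (simp add: power2_eq_square)
      ultimately show ?thesis using Mge by linarith
    qed
    ultimately have "(OT C a b - UOT_KL C \<tau> a b) * \<tau> \<le> M"
      using tau_pos mult_right_mono[of "OT C a b - UOT_KL C \<tau> a b" D \<tau>] by linarith
    then show ?thesis using tau_pos by (simp add: divide_simps mult.commute)
  next
    case False
    define u where "u = D / \<tau>"
    have u0: "0 \<le> u" "u \<le> 1" using False D0 tau_pos by (auto simp: u_def divide_simps)
    have key: "OT C a b - 2 * D\<^sup>2 / \<tau> \<le> g X" if X: "X \<in> nonneg_mats" for X
    proof -
      define E1 where "E1 = (\<Sum>i\<in>UNIV. \<bar>row_sums X i - a i\<bar>)"
      define E2 where "E2 = (\<Sum>j\<in>UNIV. \<bar>col_sums X j - b j\<bar>)"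
      obtain Y where Y: "Y \<in> transport_polytope a b" "frob C Y \<le> frob C X + D * (E1 + E2)"
        using rounding[of X C D a b] X Cb a_simp b_simp unfolding E1_def E2_def nonneg_mats_def by auto
      have k1: "KL (row_sums X) a \<ge> u * E1 - u\<^sup>2"
        unfolding E1_def using KL_lower[OF rs0[OF X] a_pos a1 u0] .
      have k2: "KL (col_sums X) b \<ge> u * E2 - u\<^sup>2"
        unfolding E2_def using KL_lower[OF cs0[OF X] b_pos b1 u0] .
      have "\<tau> * (u * E1 - u\<^sup>2) \<le> \<tau> * KL (row_sums X) a" using k1 tau_pos by simp
      moreover have "\<tau> * (u * E2 - u\<^sup>2) \<le> \<tau> * KL (col_sums X) b" using k2 tau_pos by simp
      moreover have "\<tau> * (u * E1 - u\<^sup>2) = D * E1 - D\<^sup>2 / \<tau>" "\<tau> * (u * E2 - u\<^sup>2) = D * E2 - D\<^sup>2 / \<tau>"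
        using tau_pos by (auto simp: u_def power2_eq_square field_simps)
      moreover have "OT C a b \<le> frob C Y" using OTle[OF Y(1)] .
      moreover have "2 * D\<^sup>2 / \<tau> = D\<^sup>2 / \<tau> + D\<^sup>2 / \<tau>" by simp
      moreover have "D * (E1 + E2) = D * E1 + D * E2" by (simp add: algebra_simps)
      ultimately show ?thesis using Y(2) unfolding g_def by linarith
    qed
    have "OT C a b - 2 * D\<^sup>2 / \<tau> \<le> UOT_KL C \<tau> a b"
      unfolding UOT using ne key by (auto intro: cInf_greatest)
    moreover have "2 * D\<^sup>2 / \<tau> \<le> M / \<tau>" using Mge tau_pos by (simp add: divide_right_mono)
    ultimately show ?thesis by linarith
  qed
  show ?thesis using lower upper by simp
qed
end
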